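(* Let $\mathcal{P}$ be a profile of unrooted phylogenetic trees whose display graph $G(\mathcal{P})$ is connected. Let $T\in\mathcal{P}$ and suppose $F$ is a minimal cut of $G(\mathcal{P})$ that contains exactly one edge $e$ of $T$. Then the edges of the two subtrees of $T-e$ lie in different connected components of $G(\mathcal{P})-F$ (i.e., no edge of one subtree lies in the same component as an edge of the other subtree).
   Context: A phylogenetic tree is an unrooted tree whose leaves are bijectively labeled (leaves identified with labels; internal vertices have degree at least three). A profile $\mathcal{P}=\{T_1,\dots,T_k\}$ is a finite collection of phylogenetic trees; internal vertices of distinct trees are disjoint, while leaves with the same label are the same vertex. The display graph $G(\mathcal{P})$ has vertex set $\bigcup_i V(T_i)$ and edge set $\bigcup_i E(T_i)$. A cut of a connected graph $G$ is $F\subseteq E(G)$ with $G-F$ (same vertices, edges of $F$ removed) disconnected; it is minimal if no proper subset is a cut. *)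

theory Defs
  imports Main
begin

definition graph :: "'v set \<Rightarrow> 'v set set \<Rightarrow> bool" where
  "graph V E \<longleftrightarrow> finite V \<and> (\<forall>e\<in>E. card e = 2 \<and> e \<subseteq> V)"

definition adj :: "'v set set \<Rightarrow> 'v \<Rightarrow> 'v \<Rightarrow> bool" where
  "adj E u v \<longleftrightarrow> {u, v} \<in> E"

definition reach :: "'v set set \<Rightarrow> 'v \<Rightarrow> 'v \<Rightarrow> bool" where
  "reach E = (adj E)\<^sup>*\<^sup>*"

definition connected_graph :: "'v set \<Rightarrow> 'v set set \<Rightarrow> bool" where
  "connected_graph V E \<longleftrightarrow> V \<noteq> {} \<and> (\<forall>u\<in>V. \<forall>v\<in>V. reach E u v)"

definition has_cycle :: "'v set set \<Rightarrow> bool" where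
  "has_cycle E \<longleftrightarrow> (\<exists>vs. length vs \<ge> 3 \<and> distinct vs \<and>
      (\<forall>i<length vs. {vs ! i, vs ! ((i + 1) mod length vs)} \<in> E))"

definition is_tree :: "'v set \<Rightarrow> 'v set set \<Rightarrow> bool" where
  "is_tree V E \<longleftrightarrow> graph V E \<and> connected_graph V E \<and> \<not> has_cycle E"

definition degree :: "'v set set \<Rightarrow> 'v \<Rightarrow> nat" where
  "degree E v = card {e \<in> E. v \<in> e}"

definition leaves :: "'v set \<Rightarrow> 'v set set \<Rightarrow> 'v set" where
  "leaves V E = {v \<in> V. degree E v \<le> 1}"

text \<open>Phylogenetic tree: leaves are the labels themselves; internal vertices have degree >= 3.\<close>
definition phylo_tree :: "'v set \<Rightarrow> 'v set set \<Rightarrow> bool" where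
  "phylo_tree V E \<longleftrightarrow> is_tree V E \<and> (\<forall>v \<in> V - leaves V E. degree E v \<ge> 3)"

text \<open>Profile: finite collection of phylogenetic trees; distinct trees share only
vertices that are leaves (labels) of both, i.e. internal vertices are disjoint.\<close>
definition profile :: "('v set \<times> 'v set set) set \<Rightarrow> bool" where
  "profile P \<longleftrightarrow> finite P \<and> (\<forall>T\<in>P. phylo_tree (fst T) (snd T)) \<and>
     (\<forall>T\<in>P. \<forall>T'\<in>P. T \<noteq> T' \<longrightarrow>
        fst T \<inter> fst T' \<subseteq> leaves (fst T) (snd T) \<inter> leaves (fst T') (snd T'))"

definition display_V :: "('v set \<times> 'v set set) set \<Rightarrow> 'v set" where
  "display_V P = (\<Union>T\<in>P. fst T)"

definition display_E :: "('v set \<times> 'v set set) set \<Rightarrow> 'v set set" where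
  "display_E P = (\<Union>T\<in>P. snd T)"

definition is_cut :: "'v set \<Rightarrow> 'v set set \<Rightarrow> 'v set set \<Rightarrow> bool" where
  "is_cut V E F \<longleftrightarrow> F \<subseteq> E \<and> \<not> connected_graph V (E - F)"

definition minimal_cut :: "'v set \<Rightarrow> 'v set set \<Rightarrow> 'v set set \<Rightarrow> bool" where
  "minimal_cut V E F \<longleftrightarrow> is_cut V E F \<and> (\<forall>F'. F' \<subset> F \<longrightarrow> \<not> is_cut V E F')"

end

theory Submission
  imports Defs
begin

lemma reach_sym: "reach E u v \<Longrightarrow> reach E v u"
  unfolding reach_def
proof (induction rule: rtranclp_induct)
  case base then show ?case by simp
next
  case (step y z)
  have "adj E z y" using step(2) by (simp add: adj_def insert_commute)
  then show ?case using step(3) by (meson converse_rtranclp_into_rtranclp)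
qed

lemma reach_mono: "E \<subseteq> E' \<Longrightarrow> reach E u v \<Longrightarrow> reach E' u v"
  unfolding reach_def
  by (rule rtranclp_mono[THEN predicate2D]) (auto simp: adj_def)

lemma reach_trans: "reach E u v \<Longrightarrow> reach E v w \<Longrightarrow> reach E u w"
  unfolding reach_def by simp

lemma reach_step: "reach E u v \<Longrightarrow> {v, w} \<in> E \<Longrightarrow> reach E u w"
  unfolding reach_def adj_def by (simp add: rtranclp.rtrancl_into_rtrancl)

lemma reach_refl: "reach E u u"
  unfolding reach_def by simp

lemma reach_insert_short:
  assumes ab: "reach E a b" and r: "reach (insert {a,b} E) u v"
  shows "reach E u v"
  using r unfolding reach_def[of "insert {a,b} E"]
proof (induction rule: rtranclp_induct)
  case base then show ?case by (rule reach_refl)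
next
  case (step y z)
  from step(2) have "{y,z} \<in> E \<or> {y,z} = {a,b}" unfolding adj_def by blast
  then show ?case
  proof
    assume "{y,z} \<in> E" then show ?thesis using reach_step[OF step(3)] by simp
  next
    assume "{y,z} = {a,b}"
    then have "(y = a \<and> z = b) \<or> (y = b \<and> z = a)" by (auto simp: doubleton_eq_iff)
    then show ?thesis
    proof
      assume yz: "y = a \<and> z = b"
      have "reach E u a" using step(3) yz by simp
      from reach_trans[OF this ab] show ?thesis using yz by simp
    next
      assume yz: "y = b \<and> z = a"
      have "reach E u b" using step(3) yz by simp
      from reach_trans[OF this reach_sym[OF ab]] show ?thesis using yz by simp
    qed
  qed
qed

lemma reach_insert_split:
  assumes r: "reach (insert {a,b} E) u v"
  shows "reach E u v \<or> reach E a v \<or> reach E b v"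
  using r unfolding reach_def[of "insert {a,b} E"]
proof (induction rule: rtranclp_induct)
  case base then show ?case by (simp add: reach_refl)
next
  case (step y z)
  from step(2) have "{y,z} \<in> E \<or> {y,z} = {a,b}" unfolding adj_def by blast
  then show ?case
  proof
    assume "{y,z} \<in> E" then show ?thesis using step(3) reach_step[of E u y z] reach_step[of E a y z] reach_step[of E b y z] by blast
  next
    assume "{y,z} = {a,b}"
    then have "z = a \<or> z = b" by (auto simp: doubleton_eq_iff)
    then show ?thesis using reach_refl[of E a] reach_refl[of E b] by auto
  qed
qed

theorem lemma7:
  fixes P :: "('v set \<times> 'v set set) set"
    and VT :: "'v set" and ET :: "'v set set" and F :: "'v set set" and e :: "'v set"
  assumes "profile P"
    and "connected_graph (display_V P) (display_E P)"
    and "(VT, ET) \<in> P"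
    and "minimal_cut (display_V P) (display_E P) F"
    and "e \<in> ET" and "F \<inter> ET = {e}"
  shows "\<forall>x \<in> ET - {e}. \<forall>y \<in> ET - {e}.
           (\<forall>u\<in>x. \<forall>w\<in>y. \<not> reach (ET - {e}) u w) \<longrightarrow>
           (\<forall>u\<in>x. \<forall>w\<in>y. \<not> reach (display_E P - F) u w)"
proof (intro ballI impI)
  define V where "V = display_V P"
  define E where "E = display_E P"
  have tree: "is_tree VT ET" using assms(1,3) unfolding profile_def phylo_tree_def by force
  have gr: "graph VT ET" and conT: "connected_graph VT ET" using tree is_tree_def by auto
  have ETE: "ET \<subseteq> E" using assms(3) unfolding E_def display_E_def by force
  have eF: "e \<in> F" using assms(6) by auto
  obtain a b where eab: "e = {a,b}" using gr assms(5) unfolding graph_def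
    by (metis card_2_iff)
  have aV: "a \<in> VT" "b \<in> VT" using gr assms(5) eab unfolding graph_def by auto
  have cut: "F \<subseteq> E" "\<not> connected_graph V (E - F)"
    using assms(4) unfolding minimal_cut_def is_cut_def V_def E_def by auto
  have Vne: "V \<noteq> {}" using assms(2) unfolding connected_graph_def V_def by auto
  obtain p q where pq: "p \<in> V" "q \<in> V" "\<not> reach (E - F) p q"
    using cut(2) Vne unfolding connected_graph_def by auto
  have "\<not> is_cut V E (F - {e})" using assms(4) eF unfolding minimal_cut_def V_def E_def by auto
  then have "connected_graph V (E - (F - {e}))" using cut(1) unfolding is_cut_def by auto
  moreover have "E - (F - {e}) = insert {a,b} (E - F)" using eab eF cut(1) by auto
  ultimately have "reach (insert {a,b} (E - F)) p q" using pq unfolding connected_graph_def by auto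
  then have nab: "\<not> reach (E - F) a b" using pq(3) reach_insert_short[of "E - F" a b p q] by auto
  have sub: "ET - {e} \<subseteq> E - F" using ETE assms(6) by auto
  have ETins: "ET = insert {a,b} (ET - {e})" using assms(5) eab by auto
  have side: "reach (ET - {e}) a v \<or> reach (ET - {e}) b v" if "v \<in> VT" for v
  proof -
    have "reach ET a v" using conT aV that unfolding connected_graph_def by auto
    then have "reach (insert {a,b} (ET - {e})) a v" by (metis ETins)
    then show ?thesis using reach_insert_split[of a b "ET - {e}" a v] by blast
  qed
  fix x y u w
  assume x: "x \<in> ET - {e}" and y: "y \<in> ET - {e}"
    and H: "\<forall>u\<in>x. \<forall>w\<in>y. \<not> reach (ET - {e}) u w" and u: "u \<in> x" and w: "w \<in> y"
  have uV: "u \<in> VT" and wV: "w \<in> VT" using gr x y u w unfolding graph_def by auto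
  have nuw: "\<not> reach (ET - {e}) u w" using H u w by auto
  show "\<not> reach (display_E P - F) u w"
  proof
    assume ruw: "reach (display_E P - F) u w"
    then have ruw': "reach (E - F) u w" by (simp add: E_def)
    let ?R = "reach (ET - {e})"
    have c1: "\<not> (?R a u \<and> ?R a w)"
    proof
      assume h: "?R a u \<and> ?R a w"
      then have h1: "?R a u" and h2: "?R a w" by auto
      have "?R u w" by (rule reach_trans[OF reach_sym[OF h1] h2])
      with nuw show False by simp
    qed
    have c2: "\<not> (?R b u \<and> ?R b w)"
    proof
      assume h: "?R b u \<and> ?R b w"
      then have h1: "?R b u" and h2: "?R b w" by auto
      have "?R u w" by (rule reach_trans[OF reach_sym[OF h1] h2])
      with nuw show False by simp
    qed
    have d: "(?R a u \<and> ?R b w) \<or> (?R b u \<and> ?R a w)"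
      using side[OF uV] side[OF wV] c1 c2 by blast
    have s1: "?R p q \<Longrightarrow> reach (E - F) p q" for p q using reach_mono[OF sub] .
    from d show False
    proof
      assume h: "?R a u \<and> ?R b w"
      then have h1: "?R a u" and h2: "?R b w" by auto
      have "reach (E - F) a b"
        by (rule reach_trans[OF reach_trans[OF s1[OF h1] ruw'] reach_sym[OF s1[OF h2]]])
      then show False using nab by simp
    next
      assume h: "?R b u \<and> ?R a w"
      then have h1: "?R b u" and h2: "?R a w" by auto
      have "reach (E - F) b a"
        by (rule reach_trans[OF reach_trans[OF s1[OF h1] ruw'] reach_sym[OF s1[OF h2]]])
      then show False using nab reach_sym[of "E - F" b a] by simp
    qed
  qed
qed

end
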